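(* Let $G=A\oplus T$ be an abelian group where $T$ is the torsion subgroup of $G$ (so $A\cong G/T$ is torsion-free). Then $G$ is strongly co-Hopfian if and only if both $T$ and $A$ are strongly co-Hopfian.
   Context: All groups are abelian. A group $G$ is strongly co-Hopfian if for every endomorphism $f$ of $G$ there is $n\in\mathbb N$ with $f^n(G)=f^{n+1}(G)$. *)

theory Defs
  imports Main
begin

text \<open>Abelian groups are modelled by the type class ab_group_add: the ambient
abelian group G is the whole type, and subgroups are subsets.\<close>

definition subgrp :: "'a::ab_group_add set \<Rightarrow> bool" where
  "subgrp H \<longleftrightarrow> 0 \<in> H \<and> (\<forall>x\<in>H. \<forall>y\<in>H. x + y \<in> H) \<and> (\<forall>x\<in>H. - x \<in> H)"

text \<open>An endomorphism of the subgroup H (a group homomorphism H -> H); only the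
values on H matter.\<close>
definition endo_on :: "'a::ab_group_add set \<Rightarrow> ('a \<Rightarrow> 'a) \<Rightarrow> bool" where
  "endo_on H f \<longleftrightarrow> (\<forall>x\<in>H. f x \<in> H) \<and> (\<forall>x\<in>H. \<forall>y\<in>H. f (x + y) = f x + f y)"

definition strongly_co_Hopfian :: "'a::ab_group_add set \<Rightarrow> bool" where
  "strongly_co_Hopfian H \<longleftrightarrow>
     (\<forall>f. endo_on H f \<longrightarrow> (\<exists>n::nat. (f ^^ n) ` H = (f ^^ Suc n) ` H))"

definition torsion_part :: "'a::ab_group_add set" where
  "torsion_part = {x. \<exists>n::nat. n > 0 \<and> (\<Sum>i<n. x) = 0}"

end

theory Submission
  imports Defs
begin

definition addf :: "('a::ab_group_add \<Rightarrow> 'a) \<Rightarrow> bool" where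
  "addf f \<longleftrightarrow> (\<forall>x y. f (x + y) = f x + f y)"

lemma addf_0: "addf f \<Longrightarrow> f 0 = 0"
  unfolding addf_def by (metis add.right_neutral add_left_cancel)

lemma addf_minus: "addf f \<Longrightarrow> f (- x) = - f x"
proof -
  assume a: "addf f"
  have "f x + f (- x) = 0" using a addf_0[OF a] unfolding addf_def by (metis add.right_inverse)
  thus ?thesis by (simp add: eq_neg_iff_add_eq_0 add.commute)
qed

lemma addf_diff: "addf f \<Longrightarrow> f (x - y) = f x - f y"
proof -
  assume a: "addf f"
  have "f (x + - y) = f x + f (- y)" using a unfolding addf_def by blast
  then show ?thesis using addf_minus[OF a, of y] by (simp only: diff_conv_add_uminus)
qed

lemma addf_funpow: "addf f \<Longrightarrow> addf (f ^^ n)"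
  by (induction n) (auto simp: addf_def)

lemma addf_sum: "addf f \<Longrightarrow> f (\<Sum>i<n. x) = (\<Sum>i<(n::nat). f x)"
  by (induction n) (auto simp: addf_def addf_0)

lemma nsum_add: "(\<Sum>i<(n::nat)+m. x) = (\<Sum>i<n. x) + (\<Sum>i<m. (x::'a::ab_group_add))"
  by (induction m) (auto simp: add.assoc)

lemma nsum_mult: "(\<Sum>i<(n::nat)*m. x) = (\<Sum>j<m. (\<Sum>i<n. (x::'a::ab_group_add)))"
  by (induction m) (auto simp: nsum_add add.commute)

lemma T_add: assumes "x \<in> torsion_part" "y \<in> torsion_part" shows "x + y \<in> torsion_part"
proof -
  obtain n :: nat where n: "n > 0" "(\<Sum>i<n. x) = 0" using assms(1) unfolding torsion_part_def by auto
  obtain m :: nat where m: "m > 0" "(\<Sum>i<m. y) = 0" using assms(2) unfolding torsion_part_def by auto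
  have "(\<Sum>i<n*m. x) = 0" using n by (simp add: nsum_mult)
  moreover have "(\<Sum>i<n*m. y) = (\<Sum>i<m*n. y)" by (simp add: mult.commute)
  then have "(\<Sum>i<n*m. y) = 0" using m by (simp add: nsum_mult)
  ultimately have "(\<Sum>i<n*m. x + y) = 0" by (simp add: sum.distrib)
  moreover have "n * m > 0" using n m by simp
  ultimately show ?thesis unfolding torsion_part_def by blast
qed

lemma T_neg: assumes "x \<in> torsion_part" shows "- x \<in> torsion_part"
  using assms unfolding torsion_part_def by (auto simp: sum_negf)

lemma T_0: "0 \<in> torsion_part"
  unfolding torsion_part_def by (rule CollectI, rule exI[of _ 1]) simp

lemma T_diff: "x \<in> torsion_part \<Longrightarrow> y \<in> torsion_part \<Longrightarrow> x - y \<in> torsion_part"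
  unfolding diff_conv_add_uminus by (rule T_add, assumption, rule T_neg)

lemma T_F: assumes a: "addf F" and x: "x \<in> torsion_part" shows "F x \<in> torsion_part"
proof -
  obtain n :: nat where n: "n > 0" "(\<Sum>i<n. x) = 0" using x unfolding torsion_part_def by auto
  have "(\<Sum>i<n. F x) = F (\<Sum>i<n. x)" using addf_sum[OF a] by metis
  also have "\<dots> = 0" using n addf_0[OF a] by simp
  finally show ?thesis using n unfolding torsion_part_def by blast
qed

lemma stab1:
  fixes f :: "'a \<Rightarrow> 'a"
  assumes "(f ^^ n) ` H = (f ^^ Suc n) ` H"
  shows "(f ^^ Suc n) ` H = (f ^^ Suc (Suc n)) ` H"
proof -
  have "(f ^^ Suc n) ` H = f ` ((f ^^ n) ` H)" by (simp add: image_comp)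
  also have "\<dots> = f ` ((f ^^ Suc n) ` H)" using assms by simp
  also have "\<dots> = (f ^^ Suc (Suc n)) ` H" by (simp only: funpow.simps image_comp)
  finally show ?thesis .
qed

lemma stab_ge:
  fixes f :: "'a \<Rightarrow> 'a"
  assumes "(f ^^ n) ` H = (f ^^ Suc n) ` H" "m \<ge> n"
  shows "(f ^^ m) ` H = (f ^^ n) ` H"
  using assms(2)
proof (induction m rule: dec_induct)
  case base then show ?case by simp
next
  case (step k)
  have "\<forall>j. (f ^^ (n + j)) ` H = (f ^^ Suc (n + j)) ` H"
  proof
    fix j show "(f ^^ (n + j)) ` H = (f ^^ Suc (n + j)) ` H"
    proof (induction j)
      case 0 show ?case using assms(1) by simp
    next
      case (Suc j) then show ?case using stab1[OF Suc.IH] by simp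
    qed
  qed
  then have "(f ^^ k) ` H = (f ^^ Suc k) ` H" using step(1)
    by (metis le_add_diff_inverse)
  then show ?case using step by simp
qed

lemma retract_lift:
  assumes p: "addf p" "\<forall>x. p x \<in> H" "\<forall>x\<in>H. p x = x" and f: "endo_on H f"
  shows "endo_on UNIV (f \<circ> p)" "((f \<circ> p) ^^ Suc n) ` UNIV = (f ^^ Suc n) ` H"
proof -
  show "endo_on UNIV (f \<circ> p)" using p f unfolding endo_on_def addf_def by auto
  have fH: "\<forall>x\<in>H. f x \<in> H" using f unfolding endo_on_def by auto
  have eq: "\<forall>x\<in>H. ((f \<circ> p) ^^ m) x = (f ^^ m) x \<and> (f ^^ m) x \<in> H" for m
    by (induction m) (use p fH in auto)
  have pU: "p ` UNIV = H"
  proof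
    show "range p \<subseteq> H" using p by auto
    show "H \<subseteq> range p"
    proof
      fix h assume "h \<in> H" then have "h = p h" using p by auto
      then show "h \<in> range p" by blast
    qed
  qed
  have "((f \<circ> p) ^^ Suc n) ` UNIV = ((f \<circ> p) ^^ n) ` (f ` (p ` UNIV))"
    by (simp only: funpow_Suc_right image_comp comp_assoc)
  also have "\<dots> = ((f \<circ> p) ^^ n) ` (f ` H)" by (simp only: pU)
  also have "\<dots> = (f ^^ n) ` (f ` H)" 
  proof (rule image_cong[OF refl])
    fix x assume "x \<in> f ` H"
    then have "x \<in> H" using fH by auto
    then show "((f \<circ> p) ^^ n) x = (f ^^ n) x" using eq by blast
  qed
  also have "\<dots> = (f ^^ Suc n) ` H" by (simp only: funpow_Suc_right image_comp)
  finally show "((f \<circ> p) ^^ Suc n) ` UNIV = (f ^^ Suc n) ` H" .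
qed

locale dec =
  fixes A :: "'a::ab_group_add set"
  assumes sA: "subgrp A"
    and AT: "A \<inter> torsion_part = {0}"
    and sum: "{a + t | a t. a \<in> A \<and> t \<in> torsion_part} = UNIV"
begin

definition pa :: "'a \<Rightarrow> 'a" where
  "pa x = (SOME a. a \<in> A \<and> x - a \<in> torsion_part)"

lemma pa_prop: "pa x \<in> A \<and> x - pa x \<in> torsion_part"
proof -
  have "x \<in> {a + t | a t. a \<in> A \<and> t \<in> torsion_part}" using sum by simp
  then obtain a t where "x = a + t" "a \<in> A" "t \<in> torsion_part" by auto
  then have "\<exists>a. a \<in> A \<and> x - a \<in> torsion_part" by (intro exI[of _ a]) simp
  then show ?thesis unfolding pa_def by (rule someI_ex)
qed

lemma A_diff: "x \<in> A \<Longrightarrow> y \<in> A \<Longrightarrow> x - y \<in> A"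
  using sA unfolding subgrp_def by (metis diff_conv_add_uminus)

lemma A_add: "x \<in> A \<Longrightarrow> y \<in> A \<Longrightarrow> x + y \<in> A"
  using sA unfolding subgrp_def by blast

lemma pa_unique: assumes "a \<in> A" "x - a \<in> torsion_part" shows "pa x = a"
proof -
  have "pa x - a \<in> A" using A_diff assms pa_prop by blast
  moreover have "pa x - a = (x - a) - (x - pa x)" by simp
  then have "pa x - a \<in> torsion_part" using T_diff assms pa_prop by metis
  ultimately have "pa x - a = 0" using AT by blast
  then show ?thesis by simp
qed

lemma addf_pa: "addf pa"
  unfolding addf_def
proof (intro allI)
  fix x y
  have "(x + y) - (pa x + pa y) = (x - pa x) + (y - pa y)" by simp
  then have "(x + y) - (pa x + pa y) \<in> torsion_part" using T_add pa_prop by metis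
  then show "pa (x + y) = pa x + pa y" using pa_unique A_add pa_prop by blast
qed

lemma pa_A: "a \<in> A \<Longrightarrow> pa a = a"
  by (rule pa_unique) (simp_all add: T_0)

lemma pa_T: "t \<in> torsion_part \<Longrightarrow> pa t = 0"
  using pa_unique sA unfolding subgrp_def by fastforce

definition pt :: "'a \<Rightarrow> 'a" where "pt x = x - pa x"

lemma addf_pt: "addf pt"
  using addf_pa unfolding addf_def pt_def by (simp add: algebra_simps)

lemma forward:
  assumes "strongly_co_Hopfian (UNIV :: 'a set)"
  shows "strongly_co_Hopfian (torsion_part :: 'a set) \<and> strongly_co_Hopfian A"
proof -
  have gen: "strongly_co_Hopfian H" if p: "addf p" "\<forall>x. p x \<in> H" "\<forall>x\<in>H. p x = x" for p and H :: "'a set"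
    unfolding strongly_co_Hopfian_def
  proof (intro allI impI)
    fix f assume f: "endo_on H f"
    note R = retract_lift[OF p f]
    obtain n where "((f \<circ> p) ^^ n) ` UNIV = ((f \<circ> p) ^^ Suc n) ` UNIV"
      using assms R(1) unfolding strongly_co_Hopfian_def by blast
    then have "((f \<circ> p) ^^ Suc n) ` UNIV = ((f \<circ> p) ^^ Suc (Suc n)) ` UNIV" by (rule stab1)
    then have "(f ^^ Suc n) ` H = (f ^^ Suc (Suc n)) ` H" using R(2) by metis
    then show "\<exists>n. (f ^^ n) ` H = (f ^^ Suc n) ` H" by blast
  qed
  have "strongly_co_Hopfian (torsion_part :: 'a set)"
    by (rule gen[OF addf_pt]) (auto simp: pt_def pa_prop pa_T)
  moreover have "strongly_co_Hopfian A"
    by (rule gen[OF addf_pa]) (auto simp: pa_prop pa_A)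
  ultimately show ?thesis by blast
qed

lemma backward:
  assumes sT: "strongly_co_Hopfian (torsion_part :: 'a set)" and sAA: "strongly_co_Hopfian A"
  shows "strongly_co_Hopfian (UNIV :: 'a set)"
  unfolding strongly_co_Hopfian_def
proof (intro allI impI)
  fix F :: "'a \<Rightarrow> 'a" assume "endo_on UNIV F"
  then have aF: "addf F" unfolding endo_on_def addf_def by auto
  define \<alpha> where "\<alpha> = pa \<circ> F"
  have a\<alpha>: "addf \<alpha>" using aF addf_pa unfolding \<alpha>_def addf_def by auto
  have "endo_on A \<alpha>" using a\<alpha> pa_prop unfolding endo_on_def addf_def \<alpha>_def by auto
  then obtain n1 where n1: "(\<alpha> ^^ n1) ` A = (\<alpha> ^^ Suc n1) ` A"
    using sAA unfolding strongly_co_Hopfian_def by blast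
  have "endo_on torsion_part F" using aF T_F unfolding endo_on_def addf_def by auto
  then obtain n2 where n2: "(F ^^ n2) ` torsion_part = (F ^^ Suc n2) ` torsion_part"
    using sT unfolding strongly_co_Hopfian_def by blast
  define N where "N = n1 + n2"
  have hA: "(\<alpha> ^^ m) ` A = (\<alpha> ^^ N) ` A" if "m \<ge> N" for m
    using stab_ge[OF n1, of m] stab_ge[OF n1, of N] that unfolding N_def by simp
  have hT: "(F ^^ m) ` torsion_part = (F ^^ N) ` torsion_part" if "m \<ge> N" for m
    using stab_ge[OF n2, of m] stab_ge[OF n2, of N] that unfolding N_def by simp
  have K1: "(F ^^ m) a - (\<alpha> ^^ m) a \<in> torsion_part" for m a
  proof (induction m)
    case 0 then show ?case using T_0 by simp
  next
    case (Suc m)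
    define u where "u = (F ^^ m) a - (\<alpha> ^^ m) a"
    have "(F ^^ Suc m) a = F ((\<alpha> ^^ m) a) + F u"
      using aF unfolding u_def addf_def by simp (metis add.commute diff_add_cancel)
    moreover have "(\<alpha> ^^ Suc m) a = pa (F ((\<alpha> ^^ m) a))" by (simp add: \<alpha>_def)
    ultimately have "(F ^^ Suc m) a - (\<alpha> ^^ Suc m) a
        = (F ((\<alpha> ^^ m) a) - pa (F ((\<alpha> ^^ m) a))) + F u" by simp
    moreover have "F u \<in> torsion_part" using T_F[OF aF] Suc unfolding u_def by blast
    ultimately show ?case using T_add pa_prop by metis
  qed
  define n where "n = N + N"
  have aFn: "addf (F ^^ n)" "addf (F ^^ Suc n)" "addf (F ^^ N)" "addf (\<alpha> ^^ N)"
    using addf_funpow[OF aF, of n] addf_funpow[OF aF, of "Suc n"] addf_funpow[OF aF, of N]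
      addf_funpow[OF a\<alpha>, of N] by blast+
  have cl_add: "x + y \<in> range (F ^^ Suc n)" if xy: "x \<in> range (F ^^ Suc n)" "y \<in> range (F ^^ Suc n)" for x y
  proof -
    obtain u v where "x = (F ^^ Suc n) u" "y = (F ^^ Suc n) v" using xy by blast
    then have "x + y = (F ^^ Suc n) (u + v)" using aFn(2) unfolding addf_def by simp
    then show ?thesis by blast
  qed
  have cl_diff: "x - y \<in> range (F ^^ Suc n)" if xy: "x \<in> range (F ^^ Suc n)" "y \<in> range (F ^^ Suc n)" for x y
  proof -
    obtain u v where "x = (F ^^ Suc n) u" "y = (F ^^ Suc n) v" using xy by blast
    then have "x - y = (F ^^ Suc n) (u - v)" using addf_diff[OF aFn(2)] by simp
    then show ?thesis by blast
  qed
  have inTN: "(F ^^ N) s \<in> range (F ^^ Suc n)" if "s \<in> torsion_part" for s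
  proof -
    have "(F ^^ N) s \<in> (F ^^ Suc n) ` torsion_part" using hT[of "Suc n"] that unfolding n_def by auto
    then show ?thesis by auto
  qed
  have inT: "(F ^^ n) s \<in> range (F ^^ Suc n)" if "s \<in> torsion_part" for s
  proof -
    have "(F ^^ n) s \<in> (F ^^ N) ` torsion_part" using hT[of n] that unfolding n_def by auto
    then show ?thesis using inTN by auto
  qed
  have sub: "range (F ^^ n) \<subseteq> range (F ^^ Suc n)"
  proof
    fix x assume "x \<in> range (F ^^ n)"
    then obtain y where xy: "x = (F ^^ n) y" by auto
    define a where "a = pa y"
    define t where "t = y - a"
    have tT: "t \<in> torsion_part" using pa_prop unfolding t_def a_def by auto
    have aA: "a \<in> A" using pa_prop unfolding a_def by auto
    have "(\<alpha> ^^ N) a \<in> (\<alpha> ^^ (N + N)) ` A" using hA[of "N+N"] aA by auto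
    then obtain c where c: "c \<in> A" "(\<alpha> ^^ N) a = (\<alpha> ^^ N) ((\<alpha> ^^ N) c)"
      by (auto simp: funpow_add)
    define k0 where "k0 = a - (\<alpha> ^^ N) c"
    have "(\<alpha> ^^ N) k0 = 0" using c addf_diff[OF aFn(4)] unfolding k0_def by simp
    then have "(F ^^ N) k0 \<in> torsion_part" using K1[of N k0] by simp
    then have k0in: "(F ^^ n) k0 \<in> range (F ^^ Suc n)"
      using inTN unfolding n_def by (simp add: funpow_add)
    have "(\<alpha> ^^ N) c \<in> (\<alpha> ^^ Suc n) ` A" using hA[of "Suc n"] c(1) unfolding n_def by auto
    then obtain b where b: "(\<alpha> ^^ N) c = (\<alpha> ^^ Suc n) b" by auto
    define s where "s = (F ^^ Suc n) b - (\<alpha> ^^ Suc n) b"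
    have sT: "s \<in> torsion_part" using K1 unfolding s_def by blast
    have "(F ^^ n) ((\<alpha> ^^ N) c) = (F ^^ n) ((F ^^ Suc n) b) - (F ^^ n) s"
    proof -
      have "(\<alpha> ^^ N) c = (F ^^ Suc n) b - s" using b unfolding s_def by simp
      then show ?thesis using addf_diff[OF aFn(1)] by simp
    qed
    moreover have "(F ^^ n) ((F ^^ Suc n) b) = (F ^^ Suc n) ((F ^^ n) b)"
      by (metis add.commute comp_apply funpow_add)
    ultimately have cin: "(F ^^ n) ((\<alpha> ^^ N) c) \<in> range (F ^^ Suc n)"
      using cl_diff inT sT by auto
    have "y = k0 + (\<alpha> ^^ N) c + t" unfolding k0_def t_def by simp
    then have "x = (F ^^ n) k0 + (F ^^ n) ((\<alpha> ^^ N) c) + (F ^^ n) t"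
      using xy aFn(1) unfolding addf_def by simp
    then show "x \<in> range (F ^^ Suc n)" using cl_add[OF cl_add[OF k0in cin] inT[OF tT]] by simp
  qed
  have "range (F ^^ Suc n) \<subseteq> range (F ^^ n)"
  proof
    fix x assume "x \<in> range (F ^^ Suc n)"
    then obtain y where y: "x = (F ^^ Suc n) y" by blast
    have "(F ^^ Suc n) y = (F ^^ n) (F y)" by (simp only: funpow_Suc_right comp_apply)
    then show "x \<in> range (F ^^ n)" using y by blast
  qed
  with sub show "\<exists>n. (F ^^ n) ` UNIV = (F ^^ Suc n) ` UNIV" by blast
qed

end

theorem mainTheorem5:
  fixes A :: "'a::ab_group_add set"
  assumes "subgrp A"
    and "A \<inter> torsion_part = {0}"
    and "{a + t | a t. a \<in> A \<and> t \<in> torsion_part} = UNIV"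
  shows "strongly_co_Hopfian (UNIV :: 'a set) \<longleftrightarrow>
           strongly_co_Hopfian (torsion_part :: 'a set) \<and> strongly_co_Hopfian A"
proof -
  interpret dec A using assms by unfold_locales
  show ?thesis using forward backward by blast
qed

end
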